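(* Let $S=\langle x_1,\ldots,x_n\rangle$ be a right non-degenerate semigroup of skew type. Then $S$ has the over-jumping property: for every $a\in S$ and every $i\in\{1,\ldots,n\}$ there exist an integer $k\ge 1$ and $w\in S$ such that $aw=x_i^ka$.
   Context: A semigroup of skew type is a monoid $S$ with a monoid presentation $S=\langle x_1,\ldots,x_n \mid x_ix_j=x_kx_l\rangle$ consisting of $\binom{n}{2}$ relations, each of the form $x_ix_j=x_kx_l$ with $i\neq j$, $k\neq l$, such that every word $x_px_q$ with $p\neq q$ appears (as one side) in exactly one of the relations; $X=\{x_1,\ldots,x_n\}$. For $a,b\in X$, the partner of $ab$ is the other side of the unique defining relation containing $ab$ if $a\neq b$, and $ab$ itself if $a=b$. $S$ is right non-degenerate if for every $x\in X$ the map $X\to X$ sending $y$ to the first letter of the partner of $xy$ is surjective. *)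

theory Defs
  imports Main
begin

text \<open>Generators x_1,...,x_n are encoded by the indices 0,...,n-1; words in the free
monoid are lists of indices. A defining relation x_i x_j = x_k x_l is encoded as the
pair ((i,j),(k,l)); a presentation is a set R of such relations.\<close>

type_synonym rel2 = "(nat \<times> nat) \<times> (nat \<times> nat)"

definition word2 :: "nat \<times> nat \<Rightarrow> nat list" where
  "word2 p = [fst p, snd p]"

definition skew_type :: "nat \<Rightarrow> rel2 set \<Rightarrow> bool" where
  "skew_type n R \<longleftrightarrow>
     finite R \<and> card R = n choose 2 \<and>
     (\<forall>((i,j),(k,l)) \<in> R. i < n \<and> j < n \<and> k < n \<and> l < n \<and> i \<noteq> j \<and> k \<noteq> l) \<and>
     (\<forall>p < n. \<forall>q < n. p \<noteq> q \<longrightarrow>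
        (\<exists>!r. r \<in> R \<and> (fst r = (p,q) \<or> snd r = (p,q))))"

definition pres_step :: "rel2 set \<Rightarrow> nat list \<Rightarrow> nat list \<Rightarrow> bool" where
  "pres_step R u v \<longleftrightarrow> (\<exists>a b r. r \<in> R \<and>
      ((u = a @ word2 (fst r) @ b \<and> v = a @ word2 (snd r) @ b) \<or>
       (u = a @ word2 (snd r) @ b \<and> v = a @ word2 (fst r) @ b)))"

text \<open>Equality in the monoid S presented by R: the congruence generated by R.\<close>
definition pres_eq :: "rel2 set \<Rightarrow> nat list \<Rightarrow> nat list \<Rightarrow> bool" where
  "pres_eq R u v \<longleftrightarrow> (pres_step R)\<^sup>*\<^sup>* u v"

definition partner :: "rel2 set \<Rightarrow> nat \<Rightarrow> nat \<Rightarrow> nat \<times> nat" where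
  "partner R i j = (if i = j then (i, j)
     else THE q. ((i,j), q) \<in> R \<or> (q, (i,j)) \<in> R)"

definition right_nondegenerate :: "nat \<Rightarrow> rel2 set \<Rightarrow> bool" where
  "right_nondegenerate n R \<longleftrightarrow>
     (\<forall>x < n. (\<lambda>y. fst (partner R x y)) ` {..<n} = {..<n})"

end

theory Submission
  imports Defs
begin

lemma partner_rel:
  assumes sk: "skew_type n R" and z: "z < n" and q: "q < n" and ne: "z \<noteq> q"
  shows "((z,q), partner R z q) \<in> R \<or> (partner R z q, (z,q)) \<in> R"
proof -
  from sk z q ne obtain r where r: "r \<in> R" "fst r = (z,q) \<or> snd r = (z,q)"
    and u: "\<And>r'. r' \<in> R \<and> (fst r' = (z,q) \<or> snd r' = (z,q)) \<Longrightarrow> r' = r"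
    unfolding skew_type_def by metis
  show ?thesis
  proof (cases "fst r = (z,q)")
    case True
    have "(THE q'. ((z,q), q') \<in> R \<or> (q', (z,q)) \<in> R) = snd r"
    proof (rule the_equality)
      show "((z, q), snd r) \<in> R \<or> (snd r, z, q) \<in> R" using True r by (metis prod.collapse)
    next
      fix q' assume "((z, q), q') \<in> R \<or> (q', z, q) \<in> R"
      then show "q' = snd r"
      proof
        assume "((z, q), q') \<in> R" then have "((z,q),q') = r" using u by auto
        then show ?thesis by auto
      next
        assume "(q', z, q) \<in> R" then have "(q', (z,q)) = r" using u by auto
        then show ?thesis using True by auto
      qed
    qed
    then have "partner R z q = snd r" using ne by (simp add: partner_def)
    then show ?thesis using True r by (metis prod.collapse)
  next
    case False
    then have S: "snd r = (z,q)" using r by auto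
    have "(THE q'. ((z,q), q') \<in> R \<or> (q', (z,q)) \<in> R) = fst r"
    proof (rule the_equality)
      show "((z, q), fst r) \<in> R \<or> (fst r, z, q) \<in> R" using S r by (metis prod.collapse)
    next
      fix q' assume "((z, q), q') \<in> R \<or> (q', z, q) \<in> R"
      then show "q' = fst r"
      proof
        assume "((z, q), q') \<in> R" then have "((z,q),q') = r" using u by auto
        then show ?thesis using S by auto
      next
        assume "(q', z, q) \<in> R" then have "(q', (z,q)) = r" using u by auto
        then show ?thesis by auto
      qed
    qed
    then have "partner R z q = fst r" using ne by (simp add: partner_def)
    then show ?thesis using S r by (metis prod.collapse)
  qed
qed

lemma partner_bound:
  assumes sk: "skew_type n R" and z: "z < n" and q: "q < n"
  shows "fst (partner R z q) < n \<and> snd (partner R z q) < n"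
proof (cases "z = q")
  case True then show ?thesis using z by (simp add: partner_def)
next
  case False
  from partner_rel[OF sk z q False] sk show ?thesis
    unfolding skew_type_def by (cases "partner R z q") fastforce
qed

lemma step_ctx: "pres_step R u v \<Longrightarrow> pres_step R (p @ u @ s) (p @ v @ s)"
  unfolding pres_step_def
  by (metis append.assoc)

lemma eq_ctx: "pres_eq R u v \<Longrightarrow> pres_eq R (p @ u @ s) (p @ v @ s)"
  unfolding pres_eq_def
proof (induction rule: rtranclp_induct)
  case base then show ?case by simp
next
  case (step y z) then show ?case by (meson rtranclp.rtrancl_into_rtrancl step_ctx)
qed

lemma eq_trans: "pres_eq R u v \<Longrightarrow> pres_eq R v w \<Longrightarrow> pres_eq R u w"
  unfolding pres_eq_def by simp

lemma partner_eq:
  assumes sk: "skew_type n R" and z: "z < n" and q: "q < n"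
  shows "pres_eq R [fst (partner R z q), snd (partner R z q)] [z, q]"
proof (cases "z = q")
  case True then show ?thesis by (simp add: partner_def pres_eq_def)
next
  case False
  have "pres_step R [fst (partner R z q), snd (partner R z q)] [z, q]"
    using partner_rel[OF sk z q False] unfolding pres_step_def word2_def
    by (metis append.left_neutral append_Nil2 fst_conv snd_conv)
  then show ?thesis unfolding pres_eq_def by simp
qed

fun hh :: "rel2 set \<Rightarrow> nat \<Rightarrow> nat list \<Rightarrow> nat list" where
  "hh R z [] = []"
| "hh R z (q # c) = fst (partner R z q) # hh R (snd (partner R z q)) c"

fun hy :: "rel2 set \<Rightarrow> nat \<Rightarrow> nat list \<Rightarrow> nat" where
  "hy R z [] = z"
| "hy R z (q # c) = hy R (snd (partner R z q)) c"

lemma hh_props: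
  assumes sk: "skew_type n R"
  shows "z < n \<Longrightarrow> set c \<subseteq> {..<n} \<Longrightarrow>
    length (hh R z c) = length c \<and> set (hh R z c) \<subseteq> {..<n} \<and> hy R z c < n \<and>
    pres_eq R (hh R z c @ [hy R z c]) (z # c)"
proof (induction c arbitrary: z)
  case Nil then show ?case by (simp add: pres_eq_def)
next
  case (Cons q c)
  let ?x = "fst (partner R z q)" and ?z' = "snd (partner R z q)"
  have b: "?x < n" "?z' < n" using partner_bound[OF sk, of z q] Cons.prems by auto
  have IH: "length (hh R ?z' c) = length c \<and> set (hh R ?z' c) \<subseteq> {..<n} \<and> hy R ?z' c < n \<and>
    pres_eq R (hh R ?z' c @ [hy R ?z' c]) (?z' # c)" using Cons b by auto
  have e1: "pres_eq R (hh R z (q # c) @ [hy R z (q#c)]) (?x # ?z' # c)"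
    using eq_ctx[OF IH[THEN conjunct2, THEN conjunct2, THEN conjunct2], of "[?x]" "[]"] by simp
  have e2: "pres_eq R (?x # ?z' # c) (z # q # c)"
    using eq_ctx[OF partner_eq[OF sk, of z q], of "[]" c] Cons.prems by simp
  show ?case using IH b e1 e2 eq_trans by auto
qed

lemma hh_inj:
  assumes sk: "skew_type n R" and rnd: "right_nondegenerate n R"
  shows "z < n \<Longrightarrow> set c1 \<subseteq> {..<n} \<Longrightarrow> set c2 \<subseteq> {..<n} \<Longrightarrow> length c1 = length c2 \<Longrightarrow>
     hh R z c1 = hh R z c2 \<Longrightarrow> c1 = c2"
proof (induction c1 arbitrary: z c2)
  case Nil then show ?case by simp
next
  case (Cons q1 c1)
  then obtain q2 c2' where c2: "c2 = q2 # c2'" by (cases c2) auto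
  have inj: "inj_on (\<lambda>y. fst (partner R z y)) {..<n}"
    using rnd Cons.prems(1) unfolding right_nondegenerate_def
    by (simp add: inj_on_iff_eq_card)
  have "fst (partner R z q1) = fst (partner R z q2)" using Cons.prems c2 by simp
  then have "q1 = q2" using inj Cons.prems c2 by (auto dest: inj_onD)
  moreover have "snd (partner R z q1) < n" using partner_bound[OF sk, of z q1] Cons.prems by auto
  ultimately show ?case using Cons c2 by auto
qed

lemma inj_funpow: "inj_on f A \<Longrightarrow> f ` A \<subseteq> A \<Longrightarrow> inj_on (f ^^ p) A"
proof (induction p)
  case 0 then show ?case by simp
next
  case (Suc p)
  have "inj_on ((f ^^ p) \<circ> f) A"
    by (rule comp_inj_on) (use Suc in \<open>auto intro: inj_on_subset\<close>)
  then show ?case by (simp only: funpow_Suc_right)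
qed

lemma funpow_in: "f ` A \<subseteq> A \<Longrightarrow> a \<in> A \<Longrightarrow> (f ^^ p) a \<in> A"
  by (induction p) auto

lemma periodic:
  assumes fin: "finite A" and inj: "inj_on f A" and into: "f ` A \<subseteq> A" and a: "a \<in> A"
  shows "\<exists>k \<ge> 1. (f ^^ k) a = a"
proof -
  let ?g = "\<lambda>j. (f ^^ j) a"
  have "?g ` {..card A} \<subseteq> A" using funpow_in[OF into a] by auto
  then have "card (?g ` {..card A}) \<le> card A" using fin by (simp add: card_mono)
  then have "\<not> inj_on ?g {..card A}" by (intro pigeonhole) auto
  then obtain p0 q0 where pq0: "p0 \<noteq> q0" "?g p0 = ?g q0" unfolding inj_on_def by blast
  obtain p q where pq: "p < q" "?g p = ?g q"
  proof (cases "p0 < q0")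
    case True then show ?thesis using that pq0 by blast
  next
    case False then have "q0 < p0" using pq0(1) by simp
    then show ?thesis using that pq0(2) by simp
  qed
  have qe: "q = (q - p) + p" using pq(1) by simp
  have "(f ^^ q) a = (f ^^ p) ((f ^^ (q - p)) a)"
    by (subst qe) (simp only: funpow_add o_apply add.commute)
  then have "(f ^^ p) ((f ^^ (q - p)) a) = (f ^^ p) a" using pq(2) by simp
  moreover have "(f ^^ (q - p)) a \<in> A" by (rule funpow_in[OF into a])
  ultimately have "(f ^^ (q - p)) a = a"
    using inj_onD[OF inj_funpow[OF inj into, of p]] a by blast
  then show ?thesis using pq by (intro exI[of _ "q - p"]) auto
qed

theorem proposition4p1:
  "\<lbrakk>skew_type n R; right_nondegenerate n R; set (a :: nat list) \<subseteq> {..<n}; i < n\<rbrakk>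
   \<Longrightarrow> \<exists>k \<ge> (1::nat). \<exists>w. set w \<subseteq> {..<n} \<and> pres_eq R (a @ w) (replicate k i @ a)"
proof -
  assume sk: "skew_type n R" and rnd: "right_nondegenerate n R" and a: "set a \<subseteq> {..<n}"
    and i: "i < n"
  define A where "A = {c. set c \<subseteq> {..<n} \<and> length c = length a}"
  define f where "f = hh R i"
  have fin: "finite A" unfolding A_def by (rule finite_lists_length_eq) simp
  have into: "f ` A \<subseteq> A" unfolding A_def f_def using hh_props[OF sk i] by auto
  have inj: "inj_on f A" unfolding A_def f_def
    by (rule inj_onI) (use hh_inj[OF sk rnd i] in auto)
  have aA: "a \<in> A" using a by (simp add: A_def)
  have main: "\<exists>w. set w \<subseteq> {..<n} \<and> pres_eq R ((f ^^ j) c @ w) (replicate j i @ c)"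
    if "c \<in> A" for j c
  proof (induction j)
    case 0 then show ?case by (intro exI[of _ "[]"]) (simp add: pres_eq_def)
  next
    case (Suc j)
    then obtain w where w: "set w \<subseteq> {..<n}" "pres_eq R ((f ^^ j) c @ w) (replicate j i @ c)"
      by auto
    let ?d = "(f ^^ j) c"
    have dA: "?d \<in> A" using funpow_in[OF into that] .
    then have P: "hy R i ?d < n \<and> pres_eq R (f ?d @ [hy R i ?d]) (i # ?d)"
      using hh_props[OF sk i, of ?d] unfolding A_def f_def by auto
    have e1: "pres_eq R (f ?d @ [hy R i ?d] @ w) (i # ?d @ w)"
      using eq_ctx[OF P[THEN conjunct2], of "[]" w] by simp
    have e2: "pres_eq R (i # ?d @ w) (i # replicate j i @ c)"
      using eq_ctx[OF w(2), of "[i]" "[]"] by simp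
    show ?case
      using e1 e2 eq_trans P w(1)
      by (intro exI[of _ "[hy R i ?d] @ w"]) auto
  qed
  obtain k where k: "k \<ge> 1" "(f ^^ k) a = a" using periodic[OF fin inj into aA] by auto
  then show ?thesis using main[OF aA, of k] by auto
qed

end
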